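(* The sequence $\Delta(\mathbf{t}_{3/2})$ is $3/2$-automatic.
   Context: Base-$3/2$ expansions: $\langle 0\rangle_{3/2}$ is the empty word, and for $n\ge 1$, writing $2n=3m+d$ with integers $m\ge0$, $d\in\{0,1,2\}$, set $\langle n\rangle_{3/2}=\langle m\rangle_{3/2}\,d$ (a word over $\{0,1,2\}$, most significant digit first). The Thue--Morse word in base $3/2$ is $\mathbf{t}_{3/2}=(t_n)_{n\ge0}$ with $t_n$ the digit sum of $\langle n\rangle_{3/2}$ modulo $2$. For a binary sequence $\mathbf{x}=(x_n)$, $\Delta(\mathbf{x})=(x_{n+1}-x_n\bmod 2)_{n\ge0}$. A sequence $(y_n)_{n\ge0}$ is $3/2$-automatic if there is a deterministic finite automaton with output, over the input alphabet $\{0,1,2\}$, such that for every $n\ge0$, $y_n$ is the output of the state reached after reading $\langle n\rangle_{3/2}$ from the initial state. *)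

theory Defs
  imports Main
begin

text \<open>Base-3/2 expansion, most significant digit first; digits are naturals in {0,1,2}.
  For n \<ge> 1, 2n = 3m + d with d = 2n mod 3, m = 2n div 3.\<close>
function base32 :: "nat \<Rightarrow> nat list" where
  "base32 n = (if n = 0 then [] else base32 ((2 * n) div 3) @ [(2 * n) mod 3])"
  by auto
termination
  by (relation "measure id") auto

definition tm32 :: "nat \<Rightarrow> nat" where
  "tm32 n = sum_list (base32 n) mod 2"

definition Delta :: "(nat \<Rightarrow> nat) \<Rightarrow> nat \<Rightarrow> nat" where
  "Delta x n = nat ((int (x (Suc n)) - int (x n)) mod 2)"

definition automatic32 :: "(nat \<Rightarrow> 'b) \<Rightarrow> bool" where
  "automatic32 y \<longleftrightarrow>
     (\<exists>(Q :: nat set) q0 (delta :: nat \<Rightarrow> nat \<Rightarrow> nat) (out :: nat \<Rightarrow> 'b).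
        finite Q \<and> q0 \<in> Q \<and>
        (\<forall>q\<in>Q. \<forall>d\<in>{0,1,2}. delta q d \<in> Q) \<and>
        (\<forall>n. out (foldl delta q0 (base32 n)) = y n))"

end

theory Submission
  imports Defs
begin

declare base32.simps[simp del]

definition dl :: "nat \<Rightarrow> nat \<Rightarrow> nat" where
  "dl q d = (if d = 0 then 0 else 1 - q)"

lemma dl0[simp]: "dl q 0 = 0" by (simp add: dl_def)
lemma dl2[simp]: "dl q 2 = 1 - q" by (simp add: dl_def)
lemma dlS[simp]: "dl q (Suc d) = 1 - q" by (simp add: dl_def)

lemma b32_pos: "n > 0 \<Longrightarrow> base32 n = base32 (2 * n div 3) @ [2 * n mod 3]"
  by (subst base32.simps) simp

lemma b32_0: "base32 0 = []"
  by (subst base32.simps) simp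

lemma fold_le1: "q \<le> 1 \<Longrightarrow> foldl dl q xs \<le> 1"
  by (induction xs arbitrary: q) (auto simp: dl_def)

lemma ar1: "even ((s1::nat) + g + s0) \<Longrightarrow> g \<le> 1 \<Longrightarrow> even (s1 + (1 - g) + (s0 + 1))"
  by presburger
lemma ar2: "even ((s1::nat) + g + s0) \<Longrightarrow> g \<le> 1 \<Longrightarrow> even ((s1 + 1) + (1 - g) + (s0 + 2))"
  by presburger

lemma key: "even (sum_list (base32 (Suc n)) + foldl dl 0 (base32 n) + sum_list (base32 n))"
proof (induction n rule: less_induct)
  case (less n)
  show ?case
  proof (cases "n = 0")
    case True
    have "base32 1 = [2]" using b32_pos[of 1] by (simp add: b32_0)
    then show ?thesis using True by (simp add: b32_0)
  next
    case False
    define m where "m = 2 * n div 3"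
    define d where "d = 2 * n mod 3"
    have mn: "m < n" using False unfolding m_def by simp
    have bn: "base32 n = base32 m @ [d]" using False b32_pos unfolding m_def d_def by simp
    have g1: "foldl dl 0 (base32 m) \<le> 1" by (rule fold_le1) simp
    have "d = 0 \<or> d = 1 \<or> d = 2" unfolding d_def by auto
    moreover
    { assume d0: "d = 0"
      have "2 * Suc n div 3 = m" "2 * Suc n mod 3 = 2" using d0 unfolding m_def d_def by presburger+
      then have "base32 (Suc n) = base32 m @ [2]" using b32_pos[of "Suc n"] by simp
      then have ?thesis using bn d0 by simp }
    moreover
    { assume d1: "d = 1"
      have "2 * Suc n div 3 = Suc m" "2 * Suc n mod 3 = 0" using d1 unfolding m_def d_def by presburger+
      then have "base32 (Suc n) = base32 (Suc m) @ [0]" using b32_pos[of "Suc n"] by simp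
      then have "sum_list (base32 (Suc n)) + foldl dl 0 (base32 n) + sum_list (base32 n) = sum_list (base32 (Suc m)) + (1 - foldl dl 0 (base32 m)) + (sum_list (base32 m) + 1)" using bn d1 by simp
      then have ?thesis using ar1[OF less[OF mn] g1] by simp }
    moreover
    { assume d2: "d = 2"
      have "2 * Suc n div 3 = Suc m" "2 * Suc n mod 3 = 1" using d2 unfolding m_def d_def by presburger+
      then have "base32 (Suc n) = base32 (Suc m) @ [1]" using b32_pos[of "Suc n"] by simp
      then have "sum_list (base32 (Suc n)) + foldl dl 0 (base32 n) + sum_list (base32 n) = (sum_list (base32 (Suc m)) + 1) + (1 - foldl dl 0 (base32 m)) + (sum_list (base32 m) + 2)" using bn d2 by simp
      then have ?thesis using ar2[OF less[OF mn] g1] by simp }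
    ultimately show ?thesis by blast
  qed
qed

lemma arith_aux:
  fixes a b g :: nat
  assumes "even (a + g + b)" "g \<le> 1"
  shows "nat ((int (a mod 2) - int (b mod 2)) mod 2) = g"
proof -
  have h: "even (a mod 2 + g + b mod 2)" using assms(1) by presburger
  have "g = 0 \<or> g = 1" using assms(2) by auto
  moreover have "a mod 2 = 0 \<or> a mod 2 = 1" "b mod 2 = 0 \<or> b mod 2 = 1" by auto
  ultimately show ?thesis using h by (elim disjE) simp_all
qed

lemma delta_eq: "Delta tm32 n = foldl dl 0 (base32 n)"
  unfolding Delta_def tm32_def
  by (rule arith_aux[OF key fold_le1]) simp

theorem lemma9:
  shows "automatic32 (Delta tm32)"
  unfolding automatic32_def
  apply (rule exI[of _ "{0,1}"], rule exI[of _ 0], rule exI[of _ dl], rule exI[of _ id])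
  apply (auto simp: dl_def delta_eq)
  done

end
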